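(* There is a function $C_6(t,\epsilon)$ such that the following holds for every positive integer $t$ and every $\epsilon\in(0,1)$: let $G$ be a connected bipartite graph with parts $A,B$, with $\delta(G)\geq C_6(t,\epsilon)$, which is induced $S_{t,t}$-free. Then for every $a\in A$ and $b\in B$ we have $|S_{N(a)}^{N(b)}(\epsilon)|\leq C_6(t,\epsilon)$.
   Context: For positive integers $a,b$, the biclaw $S_{a,b}$ is the graph with vertex set $\{x,x_1,\dots,x_a,y,y_1,\dots,y_b\}$ and edges $xy$, $xy_1,\dots,xy_b$, $yx_1,\dots,yx_a$. Induced $S_{t,t}$-free means no induced subgraph isomorphic to $S_{t,t}$. $N(v)$ is the neighbourhood of $v$, $\delta(G)$ the minimum degree. For vertex sets $X,Y$ and $\epsilon\in(0,1)$, $S_X^Y(\epsilon)=\{x\in X : |N(x)\cap Y|\leq (1-\epsilon)|Y|\}$. *)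

theory Defs
  imports Complex_Main
begin

definition graph :: "'a set \<Rightarrow> ('a \<Rightarrow> 'a \<Rightarrow> bool) \<Rightarrow> bool" where
  "graph V E \<longleftrightarrow> finite V \<and> (\<forall>u v. E u v \<longrightarrow> u \<in> V \<and> v \<in> V)
     \<and> (\<forall>u v. E u v \<longrightarrow> E v u) \<and> (\<forall>v. \<not> E v v)"

definition nbhd :: "'a set \<Rightarrow> ('a \<Rightarrow> 'a \<Rightarrow> bool) \<Rightarrow> 'a \<Rightarrow> 'a set" where
  "nbhd V E v = {u \<in> V. E v u}"

definition min_degree_ge :: "'a set \<Rightarrow> ('a \<Rightarrow> 'a \<Rightarrow> bool) \<Rightarrow> nat \<Rightarrow> bool" where
  "min_degree_ge V E d \<longleftrightarrow> (\<forall>v\<in>V. card (nbhd V E v) \<ge> d)"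

definition connected_graph :: "'a set \<Rightarrow> ('a \<Rightarrow> 'a \<Rightarrow> bool) \<Rightarrow> bool" where
  "connected_graph V E \<longleftrightarrow> V \<noteq> {} \<and> (\<forall>u\<in>V. \<forall>v\<in>V. (\<lambda>x y. E x y)\<^sup>*\<^sup>* u v)"

definition bipartition :: "'a set \<Rightarrow> ('a \<Rightarrow> 'a \<Rightarrow> bool) \<Rightarrow> 'a set \<Rightarrow> 'a set \<Rightarrow> bool" where
  "bipartition V E A B \<longleftrightarrow> A \<union> B = V \<and> A \<inter> B = {}
     \<and> (\<forall>u v. E u v \<longrightarrow> (u \<in> A \<and> v \<in> B) \<or> (u \<in> B \<and> v \<in> A))"

text \<open>Vertices of the biclaw S_{a,b}: X = x, Y = y, XL i = x_i (1..a), YL j = y_j (1..b).\<close>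
datatype bcv = X | Y | XL nat | YL nat

definition biclaw_V :: "nat \<Rightarrow> nat \<Rightarrow> bcv set" where
  "biclaw_V a b = {X, Y} \<union> XL ` {1..a} \<union> YL ` {1..b}"

fun biclaw_E0 :: "bcv \<Rightarrow> bcv \<Rightarrow> bool" where
  "biclaw_E0 X Y = True"
| "biclaw_E0 X (YL _) = True"
| "biclaw_E0 Y (XL _) = True"
| "biclaw_E0 _ _ = False"

definition biclaw_E :: "bcv \<Rightarrow> bcv \<Rightarrow> bool" where
  "biclaw_E u v \<longleftrightarrow> biclaw_E0 u v \<or> biclaw_E0 v u"

definition induced_sub :: "'b set \<Rightarrow> ('b \<Rightarrow> 'b \<Rightarrow> bool) \<Rightarrow> 'a set \<Rightarrow> ('a \<Rightarrow> 'a \<Rightarrow> bool) \<Rightarrow> bool" where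
  "induced_sub W F V E \<longleftrightarrow> (\<exists>f. inj_on f W \<and> f ` W \<subseteq> V \<and>
      (\<forall>u\<in>W. \<forall>v\<in>W. E (f u) (f v) \<longleftrightarrow> F u v))"

definition induced_biclaw_free :: "nat \<Rightarrow> 'a set \<Rightarrow> ('a \<Rightarrow> 'a \<Rightarrow> bool) \<Rightarrow> bool" where
  "induced_biclaw_free t V E \<longleftrightarrow> \<not> induced_sub (biclaw_V t t) biclaw_E V E"

definition S_set :: "'a set \<Rightarrow> ('a \<Rightarrow> 'a \<Rightarrow> bool) \<Rightarrow> 'a set \<Rightarrow> 'a set \<Rightarrow> real \<Rightarrow> 'a set" where
  "S_set V E Xs Ys eps = {x \<in> Xs. real (card (nbhd V E x \<inter> Ys)) \<le> (1 - eps) * real (card Ys)}"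

end

theory Submission
  imports Defs
begin

lemma card_filter_sum: "finite A \<Longrightarrow> card {x\<in>A. P x} = (\<Sum>x\<in>A. if P x then 1 else 0::nat)"
  by (simp add: sum.If_cases Int_def)

lemma card_filter_sum_real: "finite A \<Longrightarrow> real (card {x\<in>A. P x}) = (\<Sum>x\<in>A. if P x then 1 else 0::real)"
  by (simp add: sum.If_cases Int_def)

lemma avg_exists:
  fixes f :: "'b \<Rightarrow> real"
  assumes "finite Xs" "Xs \<noteq> {}" "sum f Xs \<ge> real (card Xs) * M"
  shows "\<exists>x\<in>Xs. f x \<ge> M"
proof (rule ccontr)
  assume "\<not> ?thesis"
  then have "\<forall>x\<in>Xs. f x < M" by auto
  then have "sum f Xs < sum (\<lambda>_. M) Xs" using assms(1,2) by (intro sum_strict_mono) auto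
  then show False using assms by simp
qed

lemma greedy:
  fixes R :: "'a \<Rightarrow> 'b \<Rightarrow> bool" and c :: real
  assumes fQ: "finite Q" and fS: "finite S" and Sne: "S \<noteq> {}" and c: "c > 0"
    and miss: "\<forall>p\<in>S. real (card {q\<in>Q. R p q}) \<ge> c * real (card Q) + real k"
  shows "\<exists>T\<subseteq>Q. card T = k \<and> real (card {p\<in>S. \<forall>q\<in>T. R p q}) \<ge> c ^ k * real (card S)"
  using miss
proof (induction k)
  case 0
  then show ?case by (intro exI[of _ "{}"]) auto
next
  case (Suc k)
  have "\<forall>p\<in>S. real (card {q\<in>Q. R p q}) \<ge> c * real (card Q) + real k"
    using Suc.prems by force
  from Suc.IH[OF this] obtain T where T: "T \<subseteq> Q" "card T = k"
    "real (card {p\<in>S. \<forall>q\<in>T. R p q}) \<ge> c ^ k * real (card S)" by blast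
  define ST where "ST = {p\<in>S. \<forall>q\<in>T. R p q}"
  have fST: "finite ST" using fS by (simp add: ST_def)
  have fT: "finite T" using T fQ finite_subset by blast
  have "c ^ k * real (card S) > 0" using c Sne fS by (simp add: card_gt_0_iff)
  then have "card ST > 0" using T(3) unfolding ST_def by linarith
  then have STne: "ST \<noteq> {}" by auto
  have each: "real (card {q\<in>Q - T. R p q}) \<ge> c * real (card Q) + 1" if "p \<in> ST" for p
  proof -
    have "{q\<in>Q. R p q} \<subseteq> {q\<in>Q - T. R p q} \<union> T" by auto
    then have "card {q\<in>Q. R p q} \<le> card ({q\<in>Q - T. R p q} \<union> T)"
      using fQ fT by (intro card_mono) auto
    also have "\<dots> \<le> card {q\<in>Q - T. R p q} + card T" by (rule card_Un_le)
    finally have "real (card {q\<in>Q. R p q}) \<le> real (card {q\<in>Q - T. R p q}) + k" using T(2) by linarith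
    moreover have "real (card {q\<in>Q. R p q}) \<ge> c * real (card Q) + real (Suc k)"
      using Suc.prems that unfolding ST_def by blast
    ultimately show ?thesis by simp
  qed
  have swap: "(\<Sum>q\<in>Q - T. real (card {p\<in>ST. R p q})) = (\<Sum>p\<in>ST. real (card {q\<in>Q - T. R p q}))"
  proof -
    have fQT: "finite (Q - T)" using fQ by simp
    have "(\<Sum>q\<in>Q - T. real (card {p\<in>ST. R p q})) = (\<Sum>q\<in>Q - T. \<Sum>p\<in>ST. if R p q then 1 else 0::real)"
      using card_filter_sum_real[OF fST] by simp
    also have "\<dots> = (\<Sum>p\<in>ST. \<Sum>q\<in>Q - T. if R p q then 1 else 0::real)" by (rule sum.swap)
    also have "\<dots> = (\<Sum>p\<in>ST. real (card {q\<in>Q - T. R p q}))"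
      using card_filter_sum_real[OF fQT] by simp
    finally show ?thesis .
  qed
  have QTne: "Q - T \<noteq> {}"
  proof -
    obtain p where "p \<in> ST" using STne by auto
    from each[OF this] have "real (card {q\<in>Q - T. R p q}) \<ge> 1"
      using c by (smt (verit) mult_nonneg_nonneg of_nat_0_le_iff)
    then have "{q\<in>Q - T. R p q} \<noteq> {}" by (metis card.empty of_nat_0 not_one_le_zero)
    then show ?thesis by auto
  qed
  have s1: "(\<Sum>p\<in>ST. real (card {q\<in>Q - T. R p q})) \<ge> (\<Sum>p\<in>ST. c * real (card Q))"
    using each by (intro sum_mono) force
  have s2: "(\<Sum>p\<in>ST. c * real (card Q)) = real (card Q) * (c * real (card ST))" by simp
  have "real (card (Q - T)) \<le> real (card Q)" using fQ by (simp add: card_mono)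
  then have s3: "real (card (Q - T)) * (c * real (card ST)) \<le> real (card Q) * (c * real (card ST))"
    using c by (intro mult_right_mono) auto
  have "(\<Sum>q\<in>Q - T. real (card {p\<in>ST. R p q})) \<ge> real (card (Q - T)) * (c * real (card ST))"
    using s1 s2 s3 swap by linarith
  from avg_exists[OF _ QTne this] fQ obtain q where q: "q \<in> Q - T" "real (card {p\<in>ST. R p q}) \<ge> c * real (card ST)"
    by auto
  have eq: "{p\<in>S. \<forall>q'\<in>insert q T. R p q'} = {p\<in>ST. R p q}" unfolding ST_def by auto
  have "c * real (card ST) \<ge> c * (c ^ k * real (card S))" using T(3) c unfolding ST_def by simp
  then have "real (card {p\<in>S. \<forall>q'\<in>insert q T. R p q'}) \<ge> c ^ Suc k * real (card S)"
    using q eq by simp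
  moreover have "card (insert q T) = Suc k" using q T fT by simp
  ultimately show ?case using q T by (intro exI[of _ "insert q T"]) auto
qed

lemma test1:
  fixes z r :: 'a and qf pf :: "nat \<Rightarrow> 'a"
  assumes d1: "\<And>i. i \<in> {1..t} \<Longrightarrow> z \<noteq> qf i \<and> z \<noteq> pf i \<and> r \<noteq> qf i \<and> r \<noteq> pf i"
   and d2: "\<And>i j. i \<in> {1..t} \<Longrightarrow> j \<in> {1..t} \<Longrightarrow> qf i \<noteq> pf j"
   and qinj: "\<And>i j. i \<in> {1..t} \<Longrightarrow> j \<in> {1..t} \<Longrightarrow> qf i = qf j \<Longrightarrow> i = j"
   and pinj: "\<And>i j. i \<in> {1..t} \<Longrightarrow> j \<in> {1..t} \<Longrightarrow> pf i = pf j \<Longrightarrow> i = j"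
   and zr: "z \<noteq> r"
   and u: "u = X \<or> u = Y \<or> (\<exists>i. i\<in>{1..t} \<and> u = XL i) \<or> (\<exists>i. i\<in>{1..t} \<and> u = YL i)"
   and v: "v = X \<or> v = Y \<or> (\<exists>i. i\<in>{1..t} \<and> v = XL i) \<or> (\<exists>i. i\<in>{1..t} \<and> v = YL i)"
   and eq: "(case u of X \<Rightarrow> z | Y \<Rightarrow> r | XL i \<Rightarrow> qf i | YL j \<Rightarrow> pf j) = (case v of X \<Rightarrow> z | Y \<Rightarrow> r | XL i \<Rightarrow> qf i | YL j \<Rightarrow> pf j)"
  shows "u = v"
  using u v eq
  by (elim disjE exE conjE; simp; metis d1 d2 qinj pinj zr atLeastAtMost_iff One_nat_def)
lemma test2:
  fixes z r :: 'a and qf pf :: "nat \<Rightarrow> 'a" and E :: "'a \<Rightarrow> 'a \<Rightarrow> bool"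
  assumes a1: "\<And>i. i \<in> {1..t} \<Longrightarrow> \<not> E (qf i) z \<and> \<not> E z (qf i) \<and> \<not> E (pf i) r \<and> \<not> E r (pf i)"
   and a3: "\<And>i j. i \<in> {1..t} \<Longrightarrow> j \<in> {1..t} \<Longrightarrow> \<not> E (qf i) (qf j) \<and> \<not> E (pf i) (pf j) \<and> \<not> E (pf i) (qf j) \<and> \<not> E (qf j) (pf i)"
   and a6: "\<And>i. i \<in> {1..t} \<Longrightarrow> E z (pf i) \<and> E (pf i) z \<and> E r (qf i) \<and> E (qf i) r"
   and zr: "E z r" "E r z" "\<not> E z z" "\<not> E r r"
   and u: "u = X \<or> u = Y \<or> (\<exists>i. i\<in>{1..t} \<and> u = XL i) \<or> (\<exists>i. i\<in>{1..t} \<and> u = YL i)"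
   and v: "v = X \<or> v = Y \<or> (\<exists>i. i\<in>{1..t} \<and> v = XL i) \<or> (\<exists>i. i\<in>{1..t} \<and> v = YL i)"
  shows "E (case u of X \<Rightarrow> z | Y \<Rightarrow> r | XL i \<Rightarrow> qf i | YL j \<Rightarrow> pf j) (case v of X \<Rightarrow> z | Y \<Rightarrow> r | XL i \<Rightarrow> qf i | YL j \<Rightarrow> pf j) \<longleftrightarrow> biclaw_E u v"
  using u v
  by (elim disjE exE conjE; simp add: biclaw_E_def zr; metis a1 a3 a6 atLeastAtMost_iff One_nat_def)

locale bg =
  fixes V :: "'a set" and E :: "'a \<Rightarrow> 'a \<Rightarrow> bool" and A B :: "'a set" and t :: nat
  assumes G: "graph V E" and bip: "bipartition V E A B"
    and free: "induced_biclaw_free t V E" and tpos: "0 < t"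
begin

abbreviation N where "N \<equiv> nbhd V E"

lemma finN: "finite (N v)"
  using G unfolding graph_def nbhd_def by auto

lemma finV: "finite V" using G unfolding graph_def by auto

lemma EV: "E u v \<Longrightarrow> u \<in> V \<and> v \<in> V" using G unfolding graph_def by auto

lemma Esym: "E u v \<Longrightarrow> E v u" using G unfolding graph_def by auto

lemma Eirr: "\<not> E v v" using G unfolding graph_def by auto

lemma memN: "u \<in> N v \<longleftrightarrow> E v u"
  using EV unfolding nbhd_def by auto

lemma sides: "E u v \<Longrightarrow> (u \<in> A \<and> v \<in> B) \<or> (u \<in> B \<and> v \<in> A)"
  using bip unfolding bipartition_def by auto

lemma disj: "A \<inter> B = {}" using bip unfolding bipartition_def by auto

lemma noE_common: "E u w \<Longrightarrow> E v w \<Longrightarrow> \<not> E u v"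
  using sides disj by blast

lemma no_p_both: "E z r \<Longrightarrow> E z p \<Longrightarrow> \<not> E r p"
  using sides disj by blast

end
context bg begin

lemma BL:
  assumes zr: "E z r" and P: "P \<subseteq> N z" and T: "T \<subseteq> N r" and cP: "card P = t" and cT: "card T = t"
    and ne: "\<forall>p\<in>P. \<forall>q\<in>T. \<not> E p q"
  shows False
proof -
  have fP: "finite P" and fT: "finite T" using P T finN finite_subset by blast+
  obtain pf where pf: "bij_betw pf {1..t} P" using ex_bij_betw_nat_finite_1[OF fP] cP by auto
  obtain qf where qf: "bij_betw qf {1..t} T" using ex_bij_betw_nat_finite_1[OF fT] cT by auto
  have Pne: "P \<noteq> {}" and Tne: "T \<noteq> {}" using cP cT tpos by auto
  have Ez: "E z p" if "p \<in> P" for p using P that memN by auto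
  have Er: "E r q" if "q \<in> T" for q using T that memN by auto
  have zV: "z \<in> V" "r \<in> V" using EV zr by auto
  have PV: "P \<subseteq> V" "T \<subseteq> V" using P T unfolding nbhd_def by auto
  have zT: "z \<notin> T" using Pne Ez ne Esym by blast
  have rP: "r \<notin> P" using Tne Er ne Esym by blast
  have zP: "z \<notin> P" using Ez Eirr by blast
  have rT: "r \<notin> T" using Er Eirr by blast
  have zr': "z \<noteq> r" using zr Eirr by blast
  have PT: "P \<inter> T = {}" using Ez Er zr no_p_both by blast
  define f where "f = (\<lambda>v. case v of X \<Rightarrow> z | Y \<Rightarrow> r | XL i \<Rightarrow> qf i | YL j \<Rightarrow> pf j)"
  have qfT: "qf i \<in> T" if "i \<in> {1..t}" for i using qf that bij_betwE by blast
  have pfP: "pf i \<in> P" if "i \<in> {1..t}" for i using pf that bij_betwE by blast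
  have qp: "qf i \<noteq> pf j" if "i \<in> {1..t}" "j \<in> {1..t}" for i j
    using qfT[OF that(1)] pfP[OF that(2)] PT by auto
  have qinj: "i = j" if "i \<in> {1..t}" "j \<in> {1..t}" "qf i = qf j" for i j
    using qf that unfolding bij_betw_def inj_on_def by blast
  have pinj: "i = j" if "i \<in> {1..t}" "j \<in> {1..t}" "pf i = pf j" for i j
    using pf that unfolding bij_betw_def inj_on_def by blast
  have d1: "z \<noteq> qf i \<and> z \<noteq> pf i \<and> r \<noteq> qf i \<and> r \<noteq> pf i" if "i \<in> {1..t}" for i
    using zT rP zP rT qfT[OF that] pfP[OF that] by metis
  have W: "biclaw_V t t = {X, Y} \<union> XL ` {1..t} \<union> YL ` {1..t}" by (simp add: biclaw_V_def)
  have cW: "u = X \<or> u = Y \<or> (\<exists>i. i\<in>{1..t} \<and> u = XL i) \<or> (\<exists>i. i\<in>{1..t} \<and> u = YL i)"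
    if "u \<in> biclaw_V t t" for u using that unfolding W by blast
  have "inj_on f (biclaw_V t t)"
    unfolding inj_on_def
  proof (intro ballI impI)
    fix u v assume u: "u \<in> biclaw_V t t" and v: "v \<in> biclaw_V t t" and eq: "f u = f v"
    show "u = v"
      by (rule test1[OF d1 qp qinj pinj zr' cW[OF u] cW[OF v] eq[unfolded f_def]])
  qed
  moreover have "f ` biclaw_V t t \<subseteq> V"
  proof
    fix w assume "w \<in> f ` biclaw_V t t"
    then obtain u where u: "u \<in> biclaw_V t t" "w = f u" by blast
    show "w \<in> V" using cW[OF u(1)] u(2) zV PV qfT pfP unfolding f_def by auto
  qed
  moreover have "\<forall>u\<in>biclaw_V t t. \<forall>v\<in>biclaw_V t t. E (f u) (f v) \<longleftrightarrow> biclaw_E u v"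
  proof (intro ballI)
    fix u v assume u: "u \<in> biclaw_V t t" and v: "v \<in> biclaw_V t t"
    have a1: "\<not> E (qf i) z \<and> \<not> E z (qf i) \<and> \<not> E (pf i) r \<and> \<not> E r (pf i)" if "i \<in> {1..t}" for i
      using noE_common[of z r "qf i"] noE_common[of r z "pf i"] Er[OF qfT[OF that]] Ez[OF pfP[OF that]] zr Esym by blast
    have a3: "\<not> E (qf i) (qf j) \<and> \<not> E (pf i) (pf j) \<and> \<not> E (pf i) (qf j) \<and> \<not> E (qf j) (pf i)"
      if "i \<in> {1..t}" "j \<in> {1..t}" for i j
      using noE_common[of "qf i" r "qf j"] noE_common[of "pf i" z "pf j"]
        Er[OF qfT[OF that(1)]] Er[OF qfT[OF that(2)]] Ez[OF pfP[OF that(1)]] Ez[OF pfP[OF that(2)]]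
        ne pfP[OF that(1)] qfT[OF that(2)] Esym by blast
    have a6: "E z (pf i) \<and> E (pf i) z \<and> E r (qf i) \<and> E (qf i) r" if "i \<in> {1..t}" for i
      using Ez[OF pfP[OF that]] Er[OF qfT[OF that]] Esym by blast
    have zr2: "E z r" "E r z" "\<not> E z z" "\<not> E r r" using zr Esym Eirr by auto
    show "E (f u) (f v) \<longleftrightarrow> biclaw_E u v"
      unfolding f_def by (rule test2[OF a1 a3 a6 zr2 cW[OF u] cW[OF v]])
  qed
  ultimately have "induced_sub (biclaw_V t t) biclaw_E V E" unfolding induced_sub_def by blast
  then show False using free unfolding induced_biclaw_free_def by blast
qed

end
lemma block:
  fixes R :: "'a \<Rightarrow> 'b \<Rightarrow> bool" and c :: real
  assumes fQ: "finite Q" and fS: "finite S" and c: "c > 0" and t: "t > 0"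
    and miss: "\<forall>p\<in>S. real (card {q\<in>Q. R p q}) \<ge> c * real (card Q) + real t"
    and big: "real (card S) \<ge> real t / c ^ t"
  shows "\<exists>P\<subseteq>S. \<exists>T\<subseteq>Q. card P = t \<and> card T = t \<and> (\<forall>p\<in>P. \<forall>q\<in>T. R p q)"
proof -
  have ct: "c ^ t > 0" using c by simp
  have "real t / c ^ t > 0" using ct t by simp
  then have "card S > 0" using big by linarith
  then have Sne: "S \<noteq> {}" by auto
  from greedy[OF fQ fS Sne c miss] obtain T where T: "T \<subseteq> Q" "card T = t"
    "real (card {p\<in>S. \<forall>q\<in>T. R p q}) \<ge> c ^ t * real (card S)" by blast
  have "c ^ t * real (card S) \<ge> c ^ t * (real t / c ^ t)" using big ct by (intro mult_left_mono) auto
  moreover have "c ^ t * (real t / c ^ t) = real t" using ct by (metis less_irrefl nonzero_mult_div_cancel_left times_divide_eq_right)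
  ultimately have "c ^ t * real (card S) \<ge> real t" by simp
  then have "card {p\<in>S. \<forall>q\<in>T. R p q} \<ge> t" using T(3) by linarith
  then obtain P where P: "P \<subseteq> {p\<in>S. \<forall>q\<in>T. R p q}" "card P = t" by (meson obtain_subset_with_card_n)
  show ?thesis using P T by (intro exI[of _ P] conjI exI[of _ T]) auto
qed

lemma pow_div_eq: "real t / (e / 2) ^ t = real t * (2 / e) ^ t"
  by (simp add: power_divide)

context bg begin

lemma NV: "N v \<subseteq> V" unfolding nbhd_def by auto

lemma miss_card:
  assumes "Ys \<subseteq> V" "finite Ys"
  shows "real (card {q\<in>Ys. \<not> E p q}) = real (card Ys) - real (card (N p \<inter> Ys))"
proof -
  have "{q\<in>Ys. \<not> E p q} = Ys - (N p \<inter> Ys)" using assms(1) unfolding nbhd_def by auto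
  moreover have "card (Ys - (N p \<inter> Ys)) = card Ys - card (N p \<inter> Ys)"
    using assms(2) by (intro card_Diff_subset) auto
  moreover have "card (N p \<inter> Ys) \<le> card Ys" using assms(2) by (intro card_mono) auto
  ultimately show ?thesis by simp
qed

lemma S_miss:
  assumes "p \<in> S_set V E Xs Ys e" "Ys \<subseteq> V" "finite Ys"
  shows "real (card {q\<in>Ys. \<not> E p q}) \<ge> e * real (card Ys)"
  using assms miss_card[OF assms(2,3), of p] unfolding S_set_def by (auto simp: algebra_simps)

lemma typ_miss:
  assumes "p \<in> Xs" "p \<notin> S_set V E Xs Ys e" "Ys \<subseteq> V" "finite Ys"
  shows "real (card {q\<in>Ys. \<not> E p q}) < e * real (card Ys)"
  using assms miss_card[OF assms(3,4), of p] unfolding S_set_def by (auto simp: algebra_simps)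

lemma union_bound:
  assumes fP: "finite P" and fY: "finite Ys" and m: "\<forall>p\<in>P. real (card {z\<in>Ys. \<not> E p z}) \<le> m"
  shows "real (card (Ys - {z\<in>Ys. \<forall>p\<in>P. E p z})) \<le> real (card P) * m"
proof -
  have "Ys - {z\<in>Ys. \<forall>p\<in>P. E p z} = (\<Union>p\<in>P. {z\<in>Ys. \<not> E p z})" by auto
  then have "card (Ys - {z\<in>Ys. \<forall>p\<in>P. E p z}) \<le> (\<Sum>p\<in>P. card {z\<in>Ys. \<not> E p z})"
    using card_UN_le[OF fP] by simp
  then have "real (card (Ys - {z\<in>Ys. \<forall>p\<in>P. E p z})) \<le> real (\<Sum>p\<in>P. card {z\<in>Ys. \<not> E p z})"
    by (simp only: of_nat_le_iff)
  also have "\<dots> = (\<Sum>p\<in>P. real (card {z\<in>Ys. \<not> E p z}))" by (rule of_nat_sum)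
  also have "\<dots> \<le> (\<Sum>p\<in>P. m)" using m by (intro sum_mono) auto
  finally show ?thesis by simp
qed

lemma edge_bound:
  assumes uv: "E u v" and e: "0 < e" and deg: "e / 2 * real (card (N v)) \<ge> real t"
  shows "real (card (S_set V E (N u) (N v) e)) < real t * (2 / e) ^ t + 1"
proof -
  define S0 where "S0 = S_set V E (N u) (N v) e - {v}"
  define Q where "Q = N v - {u}"
  have fQ: "finite Q" unfolding Q_def using finN by auto
  have fS0: "finite S0" unfolding S0_def S_set_def using finN by auto
  have uNv: "u \<in> N v" using uv Esym memN by auto
  have cQ: "card Q \<le> card (N v)" unfolding Q_def using finN by (intro card_mono) auto
  have miss: "\<forall>p\<in>S0. real (card {q\<in>Q. \<not> E p q}) \<ge> e / 2 * real (card Q) + real t"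
  proof
    fix p assume p: "p \<in> S0"
    then have pS: "p \<in> S_set V E (N u) (N v) e" unfolding S0_def by auto
    then have "E u p" unfolding S_set_def using memN by auto
    then have "E p u" using Esym by auto
    then have "{q\<in>Q. \<not> E p q} = {q\<in>N v. \<not> E p q}" unfolding Q_def by auto
    moreover have "real (card {q\<in>N v. \<not> E p q}) \<ge> e * real (card (N v))"
      using S_miss[OF pS NV finN] .
    moreover have "e / 2 * real (card Q) \<le> e / 2 * real (card (N v))" using cQ e by simp
    ultimately show "real (card {q\<in>Q. \<not> E p q}) \<ge> e / 2 * real (card Q) + real t"
      using deg by simp
  qed
  have small: "real (card S0) < real t * (2 / e) ^ t"
  proof (rule ccontr)
    assume "\<not> ?thesis"
    then have "real (card S0) \<ge> real t / (e / 2) ^ t" using pow_div_eq by simp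
    from block[OF fQ fS0 _ tpos miss this] e obtain P T where
      PT: "P \<subseteq> S0" "T \<subseteq> Q" "card P = t" "card T = t" "\<forall>p\<in>P. \<forall>q\<in>T. \<not> E p q" by auto
    have "P \<subseteq> N u" using PT(1) unfolding S0_def S_set_def by auto
    moreover have "T \<subseteq> N v" using PT(2) unfolding Q_def by auto
    ultimately show False using BL[OF uv _ _ PT(3,4,5)] by blast
  qed
  have "card (S_set V E (N u) (N v) e) \<le> card S0 + 1"
  proof -
    have "S_set V E (N u) (N v) e \<subseteq> insert v S0" unfolding S0_def by auto
    then have "card (S_set V E (N u) (N v) e) \<le> card (insert v S0)" using fS0 by (intro card_mono) auto
    also have "\<dots> \<le> card S0 + 1" by (simp add: card_insert_if fS0)
    finally show ?thesis .
  qed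
  then show ?thesis using small by linarith
qed

end
context bg begin

lemma S_sub: "S_set V E Xs Ys e \<subseteq> Xs" unfolding S_set_def by auto

lemma link:
  assumes xy: "E x y" and aV: "a \<in> V" and bV: "b \<in> V"
    and e: "0 < e" and dl: "0 < dl" and dlt: "(real t + 1) * dl \<le> 1/2"
    and K1a: "real (card (S_set V E (N a) (N x) dl)) \<le> K1"
    and K1b: "real (card (S_set V E (N b) (N y) dl)) \<le> K1"
    and deg: "\<forall>v\<in>V. real (card (N v)) \<ge> D"
    and D1: "e / 2 * D \<ge> K1 + real t" and D2: "dl / 2 * D \<ge> real t"
    and D3: "D / 2 > real t * (2 / dl) ^ t + 1"
  shows "real (card (S_set V E (N a) (N b) e)) < K1 + real t * (2 / e) ^ t"
proof -
  define Sa where "Sa = S_set V E (N a) (N x) dl"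
  define Sb where "Sb = S_set V E (N b) (N y) dl"
  define Sxy where "Sxy = S_set V E (N x) (N y) dl"
  define S0 where "S0 = S_set V E (N a) (N b) e - Sa"
  define Q where "Q = N b - Sb"
  have xV: "x \<in> V" and yV: "y \<in> V" using EV xy by auto
  have dNb: "real (card (N b)) \<ge> D" and dNx: "real (card (N x)) \<ge> D" and dNy: "real (card (N y)) \<ge> D"
    using deg xV yV bV by auto
  have fSa: "finite Sa" and fSb: "finite Sb" and fSxy: "finite Sxy"
    unfolding Sa_def Sb_def Sxy_def using S_sub finN finite_subset by metis+
  have fQ: "finite Q" unfolding Q_def using finN by auto
  have fS0: "finite S0" unfolding S0_def using S_sub finN finite_subset by (metis finite_Diff)
  have exy: "real (card Sxy) < real t * (2 / dl) ^ t + 1"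
    unfolding Sxy_def
  proof (rule edge_bound[OF xy dl])
    have "dl / 2 * D \<le> dl / 2 * real (card (N y))" using dNy dl by (intro mult_left_mono) auto
    then show "real t \<le> dl / 2 * real (card (N y))" using D2 by linarith
  qed
  have cQ: "card Q \<le> card (N b)" unfolding Q_def using finN by (intro card_mono) auto
  have eNb: "e / 2 * D \<le> e / 2 * real (card (N b))" using dNb e by (intro mult_left_mono) auto
  have miss: "\<forall>p\<in>S0. real (card {q\<in>Q. \<not> E p q}) \<ge> e / 2 * real (card Q) + real t"
  proof
    fix p assume p: "p \<in> S0"
    then have pS: "p \<in> S_set V E (N a) (N b) e" unfolding S0_def by auto
    have m1: "real (card {q\<in>N b. \<not> E p q}) \<ge> e * real (card (N b))" using S_miss[OF pS NV finN] .
    have "{q\<in>N b. \<not> E p q} \<subseteq> {q\<in>Q. \<not> E p q} \<union> Sb" unfolding Q_def by auto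
    then have "card {q\<in>N b. \<not> E p q} \<le> card ({q\<in>Q. \<not> E p q} \<union> Sb)"
      using fQ fSb by (intro card_mono) auto
    also have "\<dots> \<le> card {q\<in>Q. \<not> E p q} + card Sb" by (rule card_Un_le)
    finally have m2: "real (card {q\<in>N b. \<not> E p q}) \<le> real (card {q\<in>Q. \<not> E p q}) + real (card Sb)"
      by linarith
    have "e / 2 * real (card Q) \<le> e / 2 * real (card (N b))" using cQ e by simp
    then show "real (card {q\<in>Q. \<not> E p q}) \<ge> e / 2 * real (card Q) + real t"
      using m1 m2 K1b eNb D1 unfolding Sb_def by linarith
  qed
  have small: "real (card S0) < real t * (2 / e) ^ t"
  proof (rule ccontr)
    assume "\<not> ?thesis"
    then have "real (card S0) \<ge> real t / (e / 2) ^ t" using pow_div_eq by simp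
    from block[OF fQ fS0 _ tpos miss this] e obtain P T where
      PT: "P \<subseteq> S0" "T \<subseteq> Q" "card P = t" "card T = t" "\<forall>p\<in>P. \<forall>q\<in>T. \<not> E p q" by auto
    have fP: "finite P" and fT: "finite T" using PT fS0 fQ finite_subset by blast+
    have tdl: "real t * dl \<le> 1/2" using dlt dl by (simp add: algebra_simps)
    define Z where "Z = {z\<in>N x. \<forall>p\<in>P. E p z}"
    have "\<forall>p\<in>P. real (card {z\<in>N x. \<not> E p z}) \<le> dl * real (card (N x))"
    proof
      fix p assume "p \<in> P"
      then have "p \<in> N a" "p \<notin> Sa" using PT(1) unfolding S0_def S_set_def by auto
      from typ_miss[OF this(1) this(2)[unfolded Sa_def] NV finN] show "real (card {z\<in>N x. \<not> E p z}) \<le> dl * real (card (N x))"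
        by simp
    qed
    from union_bound[OF fP finN this] PT(3)
    have uZ: "real (card (N x - Z)) \<le> real t * (dl * real (card (N x)))" unfolding Z_def by simp
    have ZN: "Z \<subseteq> N x" unfolding Z_def by auto
    have "card (N x) = card Z + card (N x - Z)"
      using ZN finN by (metis card_Diff_subset card_mono diff_add_inverse le_add_diff_inverse finite_subset)
    then have "real (card Z) = real (card (N x)) - real (card (N x - Z))" by simp
    moreover have "real t * (dl * real (card (N x))) \<le> 1/2 * real (card (N x))"
      using mult_right_mono[OF tdl, of "real (card (N x))"] by (simp add: mult.assoc)
    ultimately have "real (card Z) \<ge> 1/2 * real (card (N x))" using uZ by linarith
    then have "real (card Z) > real (card Sxy)" using dNx D3 exy by linarith
    then have "\<not> Z \<subseteq> Sxy" using fSxy card_mono by (metis not_le of_nat_le_iff)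
    then obtain z where z: "z \<in> Z" "z \<notin> Sxy" by blast
    have zNx: "z \<in> N x" using z ZN by auto
    have mz: "real (card {w\<in>N y. \<not> E z w}) < dl * real (card (N y))"
      using typ_miss[OF zNx z(2)[unfolded Sxy_def] NV finN] .
    define R where "R = {r\<in>N y. \<forall>q\<in>T. E q r}"
    have "\<forall>q\<in>T. real (card {r\<in>N y. \<not> E q r}) \<le> dl * real (card (N y))"
    proof
      fix q assume "q \<in> T"
      then have "q \<in> N b" "q \<notin> Sb" using PT(2) unfolding Q_def by auto
      from typ_miss[OF this(1) this(2)[unfolded Sb_def] NV finN] show "real (card {r\<in>N y. \<not> E q r}) \<le> dl * real (card (N y))"
        by simp
    qed
    from union_bound[OF fT finN this] PT(4)
    have uR: "real (card (N y - R)) \<le> real t * (dl * real (card (N y)))" unfolding R_def by simp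
    have "\<exists>r\<in>R. E z r"
    proof (rule ccontr)
      assume "\<not> ?thesis"
      then have "N y \<subseteq> {w\<in>N y. \<not> E z w} \<union> (N y - R)" unfolding R_def by auto
      then have "card (N y) \<le> card ({w\<in>N y. \<not> E z w} \<union> (N y - R))" using finN by (intro card_mono) auto
      also have "\<dots> \<le> card {w\<in>N y. \<not> E z w} + card (N y - R)" by (rule card_Un_le)
      finally have "real (card (N y)) \<le> real (card {w\<in>N y. \<not> E z w}) + real (card (N y - R))" by linarith
      moreover have "real t * (dl * real (card (N y))) \<le> 1/2 * real (card (N y))"
        using mult_right_mono[OF tdl, of "real (card (N y))"] by (simp add: mult.assoc)
      moreover have "dl * real (card (N y)) \<le> 1/2 * real (card (N y))"
      proof (intro mult_right_mono)
        have "0 \<le> dl * real t" using dl by simp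
        then show "dl \<le> 1/2" using dlt by (simp add: algebra_simps)
      qed simp
      ultimately show False using mz uR by linarith
    qed
    then obtain r where r: "r \<in> R" "E z r" by blast
    have "P \<subseteq> N z" using z(1) memN Esym unfolding Z_def by blast
    moreover have "T \<subseteq> N r" using r(1) memN Esym unfolding R_def by blast
    ultimately show False using BL[OF r(2) _ _ PT(3,4,5)] by blast
  qed
  have "S_set V E (N a) (N b) e \<subseteq> S0 \<union> Sa" unfolding S0_def by auto
  then have "card (S_set V E (N a) (N b) e) \<le> card (S0 \<union> Sa)" using fS0 fSa by (intro card_mono) auto
  also have "\<dots> \<le> card S0 + card Sa" by (rule card_Un_le)
  finally show ?thesis using small K1a unfolding Sa_def by linarith
qed

end
definition Lf :: "nat \<Rightarrow> real \<Rightarrow> real" where "Lf t e = real t * (2 / e) ^ t"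
definition dlf :: "nat \<Rightarrow> real" where "dlf t = 1 / (2 * (real t + 1))"
definition K0f :: "nat \<Rightarrow> real" where "K0f t = Lf t (dlf t) + 1"
definition M1f :: "nat \<Rightarrow> real \<Rightarrow> real" where "M1f t e = K0f t + Lf t e + 1"

lemma Lf_nonneg: "e > 0 \<Longrightarrow> Lf t e \<ge> 0" unfolding Lf_def by simp
lemma dlf_pos: "dlf t > 0" unfolding dlf_def by simp
lemma dlf_t: "(real t + 1) * dlf t \<le> 1/2" unfolding dlf_def by simp
lemma K0f_pos: "K0f t \<ge> 1" unfolding K0f_def using Lf_nonneg[OF dlf_pos] by simp

definition reach3 :: "('a \<Rightarrow> 'a \<Rightarrow> bool) \<Rightarrow> 'a \<Rightarrow> 'a \<Rightarrow> bool" where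
  "reach3 E a b \<longleftrightarrow> E a b \<or> (\<exists>x y. E a x \<and> E x y \<and> E y b)"

context bg begin

lemma level1:
  assumes r: "reach3 E a b" and aV: "a \<in> V" and bV: "b \<in> V" and e: "0 < e"
    and deg: "\<forall>v\<in>V. real (card (N v)) \<ge> D"
    and R1: "e / 2 * D \<ge> K0f t + real t" and R4: "dlf t / 2 * D \<ge> K0f t + real t"
    and R3: "D \<ge> 2 * K0f t + 1"
  shows "real (card (S_set V E (N a) (N b) e)) < M1f t e"
proof -
  have dl: "dlf t > 0" by (rule dlf_pos)
  have K0: "K0f t \<ge> 1" by (rule K0f_pos)
  have Le: "Lf t e \<ge> 0" using Lf_nonneg e by blast
  have degt: "dlf t / 2 * real (card (N v)) \<ge> real t" if "v \<in> V" for v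
  proof -
    have "dlf t / 2 * D \<le> dlf t / 2 * real (card (N v))" using deg that dl by (intro mult_left_mono) auto
    then show ?thesis using R4 K0 by linarith
  qed
  show ?thesis
  proof (cases "E a b")
    case True
    have "e / 2 * D \<le> e / 2 * real (card (N b))" using deg bV e by (intro mult_left_mono) auto
    then have "e / 2 * real (card (N b)) \<ge> real t" using R1 K0 by linarith
    from edge_bound[OF True e this] show ?thesis unfolding M1f_def Lf_def using K0 by linarith
  next
    case False
    then obtain x y where xy: "E a x" "E x y" "E y b" using r unfolding reach3_def by blast
    have xV: "x \<in> V" "y \<in> V" using EV xy by auto
    have k1: "real (card (S_set V E (N a) (N x) (dlf t))) \<le> K0f t"
      using edge_bound[OF xy(1) dl degt[OF xV(1)]] unfolding K0f_def Lf_def by linarith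
    have k2: "real (card (S_set V E (N b) (N y) (dlf t))) \<le> K0f t"
      using edge_bound[OF Esym[OF xy(3)] dl degt[OF xV(2)]] unfolding K0f_def Lf_def by linarith
    have D2: "dlf t / 2 * D \<ge> real t" using R4 K0 by linarith
    have D3: "D / 2 > real t * (2 / dlf t) ^ t + 1"
    proof -
      have "D / 2 \<ge> K0f t + 1/2" using R3 by linarith
      then show ?thesis unfolding K0f_def Lf_def by linarith
    qed
    from link[OF xy(2) aV bV e dl dlf_t k1 k2 deg R1 D2 D3]
    show ?thesis unfolding M1f_def Lf_def by linarith
  qed
qed

lemma extend:
  assumes r: "reach3 E a b" and aV: "a \<in> V" and bV: "b \<in> V"
    and e1: "E b a'" and e2: "E a' b'"
    and deg: "\<forall>v\<in>V. real (card (N v)) \<ge> D"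
    and R4: "dlf t / 2 * D \<ge> K0f t + real t"
    and R3: "D \<ge> 2 * K0f t + 1"
    and R5: "D / 4 \<ge> M1f t (dlf t) + real t"
    and R6: "D > M1f t (dlf t) + Lf t (1/2)"
  shows "reach3 E a b'"
proof -
  have dl: "dlf t > 0" by (rule dlf_pos)
  have K0: "K0f t \<ge> 1" by (rule K0f_pos)
  have a'V: "a' \<in> V" and b'V: "b' \<in> V" using EV e2 by auto
  have k1: "real (card (S_set V E (N a) (N b) (dlf t))) \<le> M1f t (dlf t)"
    using level1[OF r aV bV dl deg R4 R4 R3] by linarith
  have degt: "dlf t / 2 * real (card (N a')) \<ge> real t"
  proof -
    have "dlf t / 2 * D \<le> dlf t / 2 * real (card (N a'))" using deg a'V dl by (intro mult_left_mono) auto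
    then show ?thesis using R4 K0 by linarith
  qed
  have k2: "real (card (S_set V E (N b') (N a') (dlf t))) \<le> M1f t (dlf t)"
    using edge_bound[OF Esym[OF e2] dl degt] Lf_nonneg[of "1/2" t] unfolding M1f_def K0f_def Lf_def by linarith
  have Mn: "M1f t (dlf t) \<ge> 0" unfolding M1f_def using K0 Lf_nonneg[OF dl, of t] Lf_nonneg[of "1/2" t] unfolding K0f_def by simp
  have R1': "1/2 / 2 * D \<ge> M1f t (dlf t) + real t" using R5 by simp
  have D2: "dlf t / 2 * D \<ge> real t" using R4 K0 by linarith
  have D3: "D / 2 > real t * (2 / dlf t) ^ t + 1"
    proof -
      have "D / 2 \<ge> K0f t + 1/2" using R3 by linarith
      then show ?thesis unfolding K0f_def Lf_def by linarith
    qed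
  from link[OF e1 aV b'V _ dl dlf_t k1 k2 deg R1' D2 D3]
  have "real (card (S_set V E (N a) (N b') (1/2))) < M1f t (dlf t) + Lf t (1/2)" unfolding Lf_def by simp
  also have "\<dots> < real (card (N a))" using R6 deg aV by force
  finally have "card (S_set V E (N a) (N b') (1/2)) < card (N a)" by linarith
  then have "\<not> N a \<subseteq> S_set V E (N a) (N b') (1/2)" using S_sub[of "N a" "N b'" "1/2"] by (metis subset_antisym less_irrefl)
  then obtain p where p: "p \<in> N a" "p \<notin> S_set V E (N a) (N b') (1/2)" by blast
  then have "real (card (N p \<inter> N b')) > (1 - 1/2) * real (card (N b'))" unfolding S_set_def by auto
  moreover have "(1 - 1/2) * real (card (N b')) \<ge> 0" by simp
  ultimately have "real (card (N p \<inter> N b')) > 0" by linarith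
  then have "card (N p \<inter> N b') > 0" by simp
  then have "N p \<inter> N b' \<noteq> {}" by (simp add: card_gt_0_iff)
  then obtain q where q: "q \<in> N p" "q \<in> N b'" by blast
  have "E a p" "E p q" "E q b'" using p(1) q memN Esym by auto
  then show ?thesis unfolding reach3_def by blast
qed

end
context bg begin

lemma all_reach:
  assumes conn: "connected_graph V E" and a: "a \<in> A"
    and deg: "\<forall>v\<in>V. real (card (N v)) \<ge> D"
    and R4: "dlf t / 2 * D \<ge> K0f t + real t"
    and R3: "D \<ge> 2 * K0f t + 1"
    and R5: "D / 4 \<ge> M1f t (dlf t) + real t"
    and R6: "D > M1f t (dlf t) + Lf t (1/2)"
  shows "\<forall>b\<in>B. reach3 E a b"
proof
  fix b assume b: "b \<in> B"
  have AV: "A \<subseteq> V" "B \<subseteq> V" using bip unfolding bipartition_def by auto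
  have aV: "a \<in> V" using a AV by auto
  have bV: "b \<in> V" using b AV by auto
  have path: "E\<^sup>*\<^sup>* a b" using conn aV bV unfolding connected_graph_def by auto
  have K0: "K0f t \<ge> 1" by (rule K0f_pos)
  have "real (card (N a)) > 0" using deg aV R3 K0 by force
  then have "N a \<noteq> {}" by auto
  then obtain b0 where b0: "E a b0" using memN by auto
  have "(w \<in> B \<longrightarrow> reach3 E a w) \<and> (w \<in> A \<longrightarrow> (\<exists>b'. b' \<in> V \<and> reach3 E a b' \<and> E b' w))"
    if "E\<^sup>*\<^sup>* a w" for w
    using that
  proof (induction rule: rtranclp_induct)
    case base
    have "a \<notin> B" using a disj by auto
    moreover have "b0 \<in> V" "reach3 E a b0" "E b0 a" using b0 EV Esym unfolding reach3_def by auto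
    ultimately show ?case by blast
  next
    case (step v w)
    have vV: "v \<in> V" and wV: "w \<in> V" using EV step.hyps(2) by auto
    show ?case
    proof (intro conjI impI)
      assume wB: "w \<in> B"
      then have "v \<in> A" using sides[OF step.hyps(2)] disj by auto
      then obtain b' where b': "b' \<in> V" "reach3 E a b'" "E b' v" using step.IH by blast
      show "reach3 E a w" by (rule extend[OF b'(2) aV b'(1) b'(3) step.hyps(2) deg R4 R3 R5 R6])
    next
      assume wA: "w \<in> A"
      then have "v \<in> B" using sides[OF step.hyps(2)] disj by auto
      then have "reach3 E a v" using step.IH by blast
      then show "\<exists>b'. b' \<in> V \<and> reach3 E a b' \<and> E b' w" using vV step.hyps(2) by blast
    qed
  qed
  then show "reach3 E a b" using path b by blast
qed

end

definition Df :: "nat \<Rightarrow> real \<Rightarrow> real" where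
  "Df t e = 2 * (K0f t + real t) / e + 2 * (K0f t + real t) / dlf t + (2 * K0f t + 1)
     + 4 * (M1f t (dlf t) + real t) + (M1f t (dlf t) + Lf t (1/2) + 1) + M1f t e"

lemma arith6:
  fixes x1 x2 k m m' l tt :: real
  assumes "0 \<le> x1" "0 \<le> x2" "1 \<le> k" "0 \<le> m" "0 \<le> m'" "0 \<le> l" "0 \<le> tt"
  defines "d \<equiv> x1 + x2 + (2 * k + 1) + 4 * (m + tt) + (m + l + 1) + m'"
  shows "x1 \<le> d" "x2 \<le> d" "2 * k + 1 \<le> d" "m + tt \<le> d / 4" "m + l < d" "m' \<le> d"
  using assms(1-7) unfolding d_def by (simp_all add: field_simps)

lemma Df_props:
  assumes e: "0 < e"
  shows "e / 2 * Df t e \<ge> K0f t + real t" and "dlf t / 2 * Df t e \<ge> K0f t + real t"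
    and "Df t e \<ge> 2 * K0f t + 1" and "Df t e / 4 \<ge> M1f t (dlf t) + real t"
    and "Df t e > M1f t (dlf t) + Lf t (1/2)" and "Df t e \<ge> M1f t e"
proof -
  have dl: "dlf t > 0" by (rule dlf_pos)
  have K0: "K0f t \<ge> 1" by (rule K0f_pos)
  have L1: "Lf t (dlf t) \<ge> 0" "Lf t e \<ge> 0" "Lf t (1/2) \<ge> 0" using Lf_nonneg dl e by auto
  have M: "M1f t (dlf t) \<ge> 0" "M1f t e \<ge> 0" unfolding M1f_def using K0 L1 by auto
  have tn: "real t \<ge> 0" by simp
  define X1 where "X1 = 2 * (K0f t + real t) / e"
  define X2 where "X2 = 2 * (K0f t + real t) / dlf t"
  have X1: "X1 \<ge> 0" "e / 2 * X1 = K0f t + real t" unfolding X1_def using e K0 by auto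
  have X2: "X2 \<ge> 0" "dlf t / 2 * X2 = K0f t + real t" unfolding X2_def using dl K0 by auto
  have D: "Df t e = X1 + X2 + (2 * K0f t + 1) + 4 * (M1f t (dlf t) + real t) + (M1f t (dlf t) + Lf t (1/2) + 1) + M1f t e"
    unfolding Df_def X1_def X2_def by simp
  note AR = arith6[OF X1(1) X2(1) K0 M(1) M(2) L1(3) tn]
  have DX1: "Df t e \<ge> X1" unfolding D by (rule AR(1))
  have DX2: "Df t e \<ge> X2" unfolding D by (rule AR(2))
  have "e / 2 * X1 \<le> e / 2 * Df t e" using DX1 e by (intro mult_left_mono) auto
  then show "e / 2 * Df t e \<ge> K0f t + real t" using X1(2) by linarith
  have "dlf t / 2 * X2 \<le> dlf t / 2 * Df t e" using DX2 dl by (intro mult_left_mono) auto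
  then show "dlf t / 2 * Df t e \<ge> K0f t + real t" using X2(2) by linarith
  show "Df t e \<ge> 2 * K0f t + 1" unfolding D by (rule AR(3))
  show "Df t e / 4 \<ge> M1f t (dlf t) + real t" unfolding D by (rule AR(4))
  show "Df t e > M1f t (dlf t) + Lf t (1/2)" unfolding D by (rule AR(5))
  show "Df t e \<ge> M1f t e" unfolding D by (rule AR(6))
qed

theorem mainTheorem9:
  "\<exists>C6 :: nat \<Rightarrow> real \<Rightarrow> nat. \<forall>t::nat. \<forall>eps::real.
     \<forall>(V :: nat set) E A B. 0 < t \<longrightarrow> 0 < eps \<longrightarrow> eps < 1 \<longrightarrow>
       graph V E \<longrightarrow> connected_graph V E \<longrightarrow> bipartition V E A B \<longrightarrow>
       min_degree_ge V E (C6 t eps) \<longrightarrow> induced_biclaw_free t V E \<longrightarrow>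
       (\<forall>a\<in>A. \<forall>b\<in>B. card (S_set V E (nbhd V E a) (nbhd V E b) eps) \<le> C6 t eps)"
proof (intro exI[of _ "\<lambda>t e. nat \<lceil>Df t e\<rceil>"] allI impI)
  fix t :: nat and eps :: real and V :: "nat set" and E A B
  assume t: "0 < t" and e: "0 < eps" and e1: "eps < 1" and G: "graph V E" and conn: "connected_graph V E"
    and bip: "bipartition V E A B" and md: "min_degree_ge V E (nat \<lceil>Df t eps\<rceil>)"
    and free: "induced_biclaw_free t V E"
  interpret bg V E A B t using G bip free t by unfold_locales
  have Dle: "Df t eps \<le> real (nat \<lceil>Df t eps\<rceil>)" by linarith
  have deg: "\<forall>v\<in>V. real (card (N v)) \<ge> Df t eps"
  proof
    fix v assume "v \<in> V"
    then have "card (N v) \<ge> nat \<lceil>Df t eps\<rceil>" using md unfolding min_degree_ge_def by auto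
    then show "real (card (N v)) \<ge> Df t eps" using Dle by linarith
  qed
  note P = Df_props[OF e, of t]
  have AV: "A \<subseteq> V" "B \<subseteq> V" using bip unfolding bipartition_def by auto
  show "\<forall>a\<in>A. \<forall>b\<in>B. card (S_set V E (N a) (N b) eps) \<le> nat \<lceil>Df t eps\<rceil>"
  proof (intro ballI)
    fix a b assume a: "a \<in> A" and b: "b \<in> B"
    have "reach3 E a b" using all_reach[OF conn a deg P(2) P(3) P(4) P(5)] b by blast
    from level1[OF this _ _ e deg P(1) P(2) P(3)] a b AV
    have "real (card (S_set V E (N a) (N b) eps)) < M1f t eps" by auto
    then have "real (card (S_set V E (N a) (N b) eps)) \<le> real (nat \<lceil>Df t eps\<rceil>)" using P(6) Dle by linarith
    then show "card (S_set V E (N a) (N b) eps) \<le> nat \<lceil>Df t eps\<rceil>" by linarith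
  qed
qed

end
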